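(* Let $\mathbb{K}\in\{\mathbb{R},\mathbb{C}\}$, let $X$ be a linear space over $\mathbb{K}$, and let $\phi\colon X\times X\to\mathbb{K}$ be biadditive with $\phi(z_0,z_0)\neq 0$ for some $z_0\in X$. Suppose the equation $f(x+y)=f(x)f(y)-\phi(x,y)$ ($x,y\in X$) has at least one solution $f\colon X\to\mathbb{K}$. Then: (i) there exist $a\in\mathbb{K}\setminus\{0\}$ and a nonzero additive functional $F\colon X\to\mathbb{K}$ such that $\phi(x,y)=a^2F(x)F(y)$ for all $x,y\in X$; and (ii) the equation has exactly two solutions $f\colon X\to\mathbb{K}$, namely $f(x)=a\phi(x,z_0)+1$ and $f(x)=-a\phi(x,z_0)+1$, where $a\in\mathbb{K}$ is a constant with $a^2\phi(x,z_0)\phi(y,z_0)=\phi(x,y)$ for all $x,y\in X$ (so $a^2=1/\phi(z_0,z_0)$).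
   Context: A map $\phi\colon X\times X\to\mathbb{K}$ is biadditive if it is additive in each variable separately (no homogeneity assumed). A functional $F\colon X\to\mathbb{K}$ is additive if $F(x+y)=F(x)+F(y)$ for all $x,y$. *)

theory Defs
  imports Complex_Main
begin

text \<open>Linear spaces over the complex numbers (the library only has real vector
spaces as a type class). Standard module axioms over the field of complex numbers.\<close>
class complex_vector = ab_group_add +
  fixes scaleC :: "complex \<Rightarrow> 'a \<Rightarrow> 'a"
  assumes scaleC_add_right: "scaleC c (x + y) = scaleC c x + scaleC c y"
    and scaleC_add_left: "scaleC (c + d) x = scaleC c x + scaleC d x"
    and scaleC_scaleC: "scaleC c (scaleC d x) = scaleC (c * d) x"
    and scaleC_one: "scaleC 1 x = x"

definition biadditive :: "('x::ab_group_add \<Rightarrow> 'x \<Rightarrow> 'k::ab_group_add) \<Rightarrow> bool" where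
  "biadditive \<phi> \<longleftrightarrow> (\<forall>x y z. \<phi> (x + y) z = \<phi> x z + \<phi> y z) \<and>
                     (\<forall>x y z. \<phi> x (y + z) = \<phi> x y + \<phi> x z)"

end

theory Submission
  imports Defs
begin


lemma sol:
  fixes \<phi> :: "'x::ab_group_add \<Rightarrow> 'x \<Rightarrow> 'k::field_char_0" and z0 :: 'x
  assumes bi: "biadditive \<phi>" and nz: "\<phi> z0 z0 \<noteq> 0"
    and fe: "\<forall>x y. f (x + y) = f x * f y - \<phi> x y"
  shows "\<exists>b. (\<forall>z. f z = b * \<phi> z z0 + 1) \<and> (\<forall>x y. b\<^sup>2 * \<phi> x z0 * \<phi> y z0 = \<phi> x y)"
proof -
  have L: "\<phi> (x + y) z = \<phi> x z + \<phi> y z" for x y z using bi unfolding biadditive_def by blast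
  have R: "\<phi> x (y + z) = \<phi> x y + \<phi> x z" for x y z using bi unfolding biadditive_def by blast
  have L0: "\<phi> 0 z = 0" for z using L[of 0 0 z] by simp
  have R0: "\<phi> z 0 = 0" for z using R[of z 0 0] by simp
  define c where "c = \<phi> z0 z0"
  have c: "c \<noteq> 0" using nz c_def by simp
  have sym: "\<phi> x y = \<phi> y x" for x y
    using fe[rule_format, of x y] fe[rule_format, of y x] by (simp add: add.commute mult.commute)
  have key: "\<phi> x y * (f z - 1) = \<phi> y z * (f x - 1)" for x y z
  proof -
    have "f ((x + y) + z) = f (x + (y + z))" by (simp add: add.assoc)
    hence "(f x * f y - \<phi> x y) * f z - (\<phi> x z + \<phi> y z) = f x * (f y * f z - \<phi> y z) - (\<phi> x y + \<phi> x z)"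
      using fe L R by metis
    thus ?thesis by (simp add: algebra_simps)
  qed
  define b where "b = (f z0 - 1) / c"
  have g: "f z = b * \<phi> z z0 + 1" for z
  proof -
    have "c * (f z - 1) = \<phi> z0 z * (f z0 - 1)" using key[of z0 z0 z] c_def by simp
    hence "f z - 1 = \<phi> z z0 * (f z0 - 1) / c" using c sym[of z0 z] by (simp add: field_simps)
    thus ?thesis unfolding b_def by (simp add: field_simps)
  qed
  have b: "\<forall>x y. b\<^sup>2 * \<phi> x z0 * \<phi> y z0 = \<phi> x y"
  proof (intro allI)
    fix x y
    have "b * \<phi> (x+y) z0 + 1 = (b * \<phi> x z0 + 1) * (b * \<phi> y z0 + 1) - \<phi> x y"
      using fe[rule_format, of x y] g by metis
    thus "b\<^sup>2 * \<phi> x z0 * \<phi> y z0 = \<phi> x y" unfolding L by (simp add: algebra_simps power2_eq_square)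
  qed
  show ?thesis using g b by blast
qed

lemma sqc:
  fixes c a :: "'k::field"
  assumes "a\<^sup>2 * c * c = c" "c \<noteq> 0"
  shows "a\<^sup>2 * c = 1"
  using assms by (metis mult_cancel_right1)

lemma generic:
  fixes \<phi> :: "'x::ab_group_add \<Rightarrow> 'x \<Rightarrow> 'k::field_char_0" and z0 :: 'x
  assumes bi: "biadditive \<phi>" and nz: "\<phi> z0 z0 \<noteq> 0"
    and fe: "\<forall>x y. f (x + y) = f x * f y - \<phi> x y"
  shows "(\<exists>a. a \<noteq> 0 \<and> (\<exists>F. additive F \<and> F \<noteq> (\<lambda>x. 0) \<and>
              (\<forall>x y. \<phi> x y = a\<^sup>2 * F x * F y))) \<and>
        (\<exists>a. \<forall>x y. a\<^sup>2 * \<phi> x z0 * \<phi> y z0 = \<phi> x y) \<and>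
        (\<forall>a. (\<forall>x y. a\<^sup>2 * \<phi> x z0 * \<phi> y z0 = \<phi> x y) \<longrightarrow>
             {f. \<forall>x y. f (x + y) = f x * f y - \<phi> x y} =
               {(\<lambda>x. a * \<phi> x z0 + 1), (\<lambda>x. - a * \<phi> x z0 + 1)} \<and>
             (\<lambda>x. a * \<phi> x z0 + 1) \<noteq> (\<lambda>x. - a * \<phi> x z0 + 1))"
proof -
  have L: "\<phi> (x + y) z = \<phi> x z + \<phi> y z" for x y z using bi unfolding biadditive_def by blast
  define c where "c = \<phi> z0 z0"
  have c: "c \<noteq> 0" using nz c_def by simp
  obtain b where g: "\<forall>z. f z = b * \<phi> z z0 + 1" and b: "\<forall>x y. b\<^sup>2 * \<phi> x z0 * \<phi> y z0 = \<phi> x y"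
    using sol[OF bi nz fe] by blast
  have bc: "b\<^sup>2 * c = 1" using b[rule_format, of z0 z0] c unfolding c_def[symmetric] by (rule sqc)
  have bnz: "b \<noteq> 0" using bc by auto
  have addF: "additive (\<lambda>x. \<phi> x z0)" by (unfold_locales) (rule L)
  have part1: "\<exists>a. a \<noteq> 0 \<and> (\<exists>F. additive F \<and> F \<noteq> (\<lambda>x. 0) \<and>
              (\<forall>x y. \<phi> x y = a\<^sup>2 * F x * F y))"
    apply (rule exI[of _ b], intro conjI bnz, rule exI[of _ "\<lambda>x. \<phi> x z0"])
    using addF b nz by (auto dest: fun_cong[where x=z0])
  have part3: "{f. \<forall>x y. f (x + y) = f x * f y - \<phi> x y} =
               {(\<lambda>x. a * \<phi> x z0 + 1), (\<lambda>x. - a * \<phi> x z0 + 1)} \<and>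
             (\<lambda>x. a * \<phi> x z0 + 1) \<noteq> (\<lambda>x. - a * \<phi> x z0 + 1)"
    if ha: "\<forall>x y. a\<^sup>2 * \<phi> x z0 * \<phi> y z0 = \<phi> x y" for a
  proof -
    have ac: "a\<^sup>2 * c = 1" using ha[rule_format, of z0 z0] c unfolding c_def[symmetric] by (rule sqc)
    have anz: "a \<noteq> 0" using ac by auto
    have sub: "h \<in> {(\<lambda>x. a * \<phi> x z0 + 1), (\<lambda>x. - a * \<phi> x z0 + 1)}"
      if hh: "\<forall>x y. h (x + y) = h x * h y - \<phi> x y" for h
    proof -
      obtain b' where g': "\<forall>z. h z = b' * \<phi> z z0 + 1" and b': "\<forall>x y. b'\<^sup>2 * \<phi> x z0 * \<phi> y z0 = \<phi> x y"
        using sol[OF bi nz hh] by blast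
      have "b'\<^sup>2 * c = 1" using b'[rule_format, of z0 z0] c unfolding c_def[symmetric] by (rule sqc)
      hence "b'\<^sup>2 = a\<^sup>2" using ac c by (metis mult_right_cancel)
      hence "b' = a \<or> b' = - a" by (simp add: power2_eq_iff)
      moreover have "h = (\<lambda>z. b' * \<phi> z z0 + 1)" using g' by auto
      ultimately show ?thesis by auto
    qed
    have sup: "\<forall>x y. (\<lambda>x. s * \<phi> x z0 + 1) (x + y) = (\<lambda>x. s * \<phi> x z0 + 1) x * (\<lambda>x. s * \<phi> x z0 + 1) y - \<phi> x y"
      if "s = a \<or> s = -a" for s
    proof (intro allI)
      fix x y
      have "s\<^sup>2 = a\<^sup>2" using that by auto
      thus "(\<lambda>x. s * \<phi> x z0 + 1) (x + y) = (\<lambda>x. s * \<phi> x z0 + 1) x * (\<lambda>x. s * \<phi> x z0 + 1) y - \<phi> x y"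
        using ha[rule_format, of x y] unfolding L
        by (simp add: algebra_simps power2_eq_square) (metis mult.assoc)
    qed
    have dist: "(\<lambda>x. a * \<phi> x z0 + 1) \<noteq> (\<lambda>x. - a * \<phi> x z0 + 1)"
    proof
      assume "(\<lambda>x. a * \<phi> x z0 + 1) = (\<lambda>x. - a * \<phi> x z0 + 1)"
      hence "a * c + 1 = - a * c + 1" unfolding c_def by (metis fun_cong)
      hence "2 * (a * c) = 0" by simp
      thus False using anz c by simp
    qed
    show ?thesis using sub sup[of a] sup[of "-a"] dist by auto
  qed
  show ?thesis using part1 b part3 by blast
qed

theorem mainTheorem2:
  shows
  "(\<forall>(\<phi> :: 'a::real_vector \<Rightarrow> 'a \<Rightarrow> real) z\<^sub>0.
      biadditive \<phi> \<and> \<phi> z\<^sub>0 z\<^sub>0 \<noteq> 0 \<and>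
      (\<exists>f. \<forall>x y. f (x + y) = f x * f y - \<phi> x y) \<longrightarrow>
        (\<exists>a. a \<noteq> 0 \<and> (\<exists>F. additive F \<and> F \<noteq> (\<lambda>x. 0) \<and>
              (\<forall>x y. \<phi> x y = a\<^sup>2 * F x * F y))) \<and>
        (\<exists>a. \<forall>x y. a\<^sup>2 * \<phi> x z\<^sub>0 * \<phi> y z\<^sub>0 = \<phi> x y) \<and>
        (\<forall>a. (\<forall>x y. a\<^sup>2 * \<phi> x z\<^sub>0 * \<phi> y z\<^sub>0 = \<phi> x y) \<longrightarrow>
             {f. \<forall>x y. f (x + y) = f x * f y - \<phi> x y} =
               {(\<lambda>x. a * \<phi> x z\<^sub>0 + 1), (\<lambda>x. - a * \<phi> x z\<^sub>0 + 1)} \<and>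
             (\<lambda>x. a * \<phi> x z\<^sub>0 + 1) \<noteq> (\<lambda>x. - a * \<phi> x z\<^sub>0 + 1)))
   \<and>
   (\<forall>(\<phi> :: 'b::complex_vector \<Rightarrow> 'b \<Rightarrow> complex) z\<^sub>0.
      biadditive \<phi> \<and> \<phi> z\<^sub>0 z\<^sub>0 \<noteq> 0 \<and>
      (\<exists>f. \<forall>x y. f (x + y) = f x * f y - \<phi> x y) \<longrightarrow>
        (\<exists>a. a \<noteq> 0 \<and> (\<exists>F. additive F \<and> F \<noteq> (\<lambda>x. 0) \<and>
              (\<forall>x y. \<phi> x y = a\<^sup>2 * F x * F y))) \<and>
        (\<exists>a. \<forall>x y. a\<^sup>2 * \<phi> x z\<^sub>0 * \<phi> y z\<^sub>0 = \<phi> x y) \<and>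
        (\<forall>a. (\<forall>x y. a\<^sup>2 * \<phi> x z\<^sub>0 * \<phi> y z\<^sub>0 = \<phi> x y) \<longrightarrow>
             {f. \<forall>x y. f (x + y) = f x * f y - \<phi> x y} =
               {(\<lambda>x. a * \<phi> x z\<^sub>0 + 1), (\<lambda>x. - a * \<phi> x z\<^sub>0 + 1)} \<and>
             (\<lambda>x. a * \<phi> x z\<^sub>0 + 1) \<noteq> (\<lambda>x. - a * \<phi> x z\<^sub>0 + 1)))"
  apply (rule conjI)
   apply (intro allI impI, elim conjE exE)
   apply (rule generic, assumption+)
  apply (intro allI impI, elim conjE exE)
  apply (rule generic, assumption+)
  done

end
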